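(* Let $\vec G=(V,E,\omega)$ be a weighted directed Eulerian graph with positive in-degrees $\deg^-(v)$, and for $S\subseteq V$ let $\Psi(S)=\sum_{v\in S}\sum_{(u,v)\in E,\,u\in S}\frac{\omega((u,v))}{\deg^-(v)}$. If $S\neq\emptyset$ satisfies $\Psi(S)/|S|\le\frac12$, then there is a subset $S'\subseteq S$ with $|S'|\ge\frac14|S|$ such that every $s\in S'$ satisfies $$\sum_{(v,s)\in E,\,v\notin S}\omega((v,s))\ge\frac14\deg^-(s).$$
   Context: $\deg^-(v)$ denotes the weighted in-degree of $v$ in $\vec G$; Eulerian means in-degree equals out-degree at every vertex. *)

theory Defs
  imports Complex_Main
begin

definition wdigraph :: "'a set \<Rightarrow> ('a \<times> 'a) set \<Rightarrow> ('a \<times> 'a \<Rightarrow> real) \<Rightarrow> bool" where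
  "wdigraph V E w \<longleftrightarrow> finite V \<and> E \<subseteq> V \<times> V \<and> (\<forall>e\<in>E. w e > 0)"

definition in_deg :: "('a \<times> 'a) set \<Rightarrow> ('a \<times> 'a \<Rightarrow> real) \<Rightarrow> 'a \<Rightarrow> real" where
  "in_deg E w v = (\<Sum>e\<in>{e\<in>E. snd e = v}. w e)"

definition out_deg :: "('a \<times> 'a) set \<Rightarrow> ('a \<times> 'a \<Rightarrow> real) \<Rightarrow> 'a \<Rightarrow> real" where
  "out_deg E w v = (\<Sum>e\<in>{e\<in>E. fst e = v}. w e)"

definition eulerian :: "'a set \<Rightarrow> ('a \<times> 'a) set \<Rightarrow> ('a \<times> 'a \<Rightarrow> real) \<Rightarrow> bool" where
  "eulerian V E w \<longleftrightarrow> (\<forall>v\<in>V. in_deg E w v = out_deg E w v)"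

definition Psi :: "('a \<times> 'a) set \<Rightarrow> ('a \<times> 'a \<Rightarrow> real) \<Rightarrow> 'a set \<Rightarrow> real" where
  "Psi E w S = (\<Sum>v\<in>S. \<Sum>u\<in>{u\<in>S. (u, v) \<in> E}. w (u, v) / in_deg E w v)"

end

theory Submission
  imports Defs
begin

theorem lemmaC3:
  fixes V :: "'a set" and E :: "('a \<times> 'a) set" and w :: "'a \<times> 'a \<Rightarrow> real"
    and S :: "'a set"
  assumes "wdigraph V E w"
    and "eulerian V E w"
    and "\<forall>v\<in>V. in_deg E w v > 0"
    and "S \<subseteq> V" and "S \<noteq> {}"
    and "Psi E w S / real (card S) \<le> 1 / 2"
  shows "\<exists>S'\<subseteq>S. real (card S') \<ge> real (card S) / 4 \<and>
           (\<forall>s\<in>S'. (\<Sum>e\<in>{e\<in>E. snd e = s \<and> fst e \<notin> S}. w e) \<ge> in_deg E w s / 4)"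
proof -
  have finV: "finite V" and EV: "E \<subseteq> V \<times> V" and wpos: "\<forall>e\<in>E. w e > 0"
    using assms(1) unfolding wdigraph_def by auto
  have finE: "finite E" using finV EV finite_subset by blast
  have finS: "finite S" using finV assms(4) finite_subset by blast
  have cS: "card S > 0" using finS assms(5) by (simp add: card_gt_0_iff)
  define inside where "inside s = (\<Sum>u\<in>{u\<in>S. (u, s) \<in> E}. w (u, s))" for s
  define g where "g s = inside s / in_deg E w s" for s
  have Psi_eq: "Psi E w S = (\<Sum>s\<in>S. g s)"
    unfolding Psi_def g_def inside_def by (simp add: sum_divide_distrib)
  have PsiS: "Psi E w S \<le> real (card S) / 2"
    using assms(6) cS by (simp add: divide_le_eq)
  have inpos: "in_deg E w s > 0" if "s \<in> S" for s using assms(3,4) that by auto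
  have inside_nn: "inside s \<ge> 0" for s
    unfolding inside_def by (rule sum_nonneg) (use wpos in auto)
  have g_nn: "g s \<ge> 0" if "s \<in> S" for s
    unfolding g_def using inside_nn[of s] inpos[OF that] by simp
  have split: "in_deg E w s = inside s + (\<Sum>e\<in>{e\<in>E. snd e = s \<and> fst e \<notin> S}. w e)" for s
  proof -
    have A: "{e\<in>E. snd e = s} = {e\<in>E. snd e = s \<and> fst e \<in> S} \<union> {e\<in>E. snd e = s \<and> fst e \<notin> S}"
      by auto
    have "in_deg E w s = (\<Sum>e\<in>{e\<in>E. snd e = s \<and> fst e \<in> S}. w e) + (\<Sum>e\<in>{e\<in>E. snd e = s \<and> fst e \<notin> S}. w e)"
      unfolding in_deg_def A
      by (rule sum.union_disjoint) (use finE in auto)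
    moreover have "(\<Sum>e\<in>{e\<in>E. snd e = s \<and> fst e \<in> S}. w e) = inside s"
      unfolding inside_def
    proof (rule sum.reindex_cong[where l="\<lambda>u. (u, s)"])
      show "inj_on (\<lambda>u. (u, s)) {u \<in> S. (u, s) \<in> E}" by (auto simp: inj_on_def)
      show "{e \<in> E. snd e = s \<and> fst e \<in> S} = (\<lambda>u. (u, s)) ` {u \<in> S. (u, s) \<in> E}" by force
    qed auto
    ultimately show ?thesis by simp
  qed
  define T where "T = {s\<in>S. g s > 3/4}"
  have TS: "T \<subseteq> S" unfolding T_def by auto
  have finT: "finite T" using finS TS finite_subset by blast
  have "real (card T) * (3/4) = (\<Sum>s\<in>T. 3/4)" by simp
  also have "\<dots> \<le> (\<Sum>s\<in>T. g s)" by (rule sum_mono) (auto simp: T_def)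
  also have "\<dots> \<le> (\<Sum>s\<in>S. g s)" by (rule sum_mono2[OF finS TS]) (use g_nn in auto)
  also have "\<dots> \<le> real (card S) / 2" using Psi_eq PsiS by simp
  finally have cT: "real (card T) * (3/4) \<le> real (card S) / 2" .
  have cST: "real (card (S - T)) = real (card S) - real (card T)"
    using card_Diff_subset[OF finT TS] card_mono[OF finS TS] by (simp add: of_nat_diff)
  show ?thesis
  proof (intro exI[of _ "S - T"] conjI ballI)
    show "S - T \<subseteq> S" by auto
    show "real (card S) / 4 \<le> real (card (S - T))" using cST cT cS by linarith
    fix s assume s: "s \<in> S - T"
    hence "g s \<le> 3/4" unfolding T_def by auto
    hence "inside s \<le> 3/4 * in_deg E w s"
      using inpos[of s] s unfolding g_def by (simp add: divide_le_eq)
    thus "in_deg E w s / 4 \<le> (\<Sum>e\<in>{e\<in>E. snd e = s \<and> fst e \<notin> S}. w e)"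
      using split[of s] by linarith
  qed
qed

end
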